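(* Let $Y$ be a set and $(A_n)_{n=1}^\infty$ a sequence of pairwise disjoint finite subsets of $Y$. Let $\mathcal{X}\subseteq\bigcup_{\emptyset\ne F\in[\mathbb{N}]^{<\infty}}\prod_{n\in F}A_n$ be hereditary, i.e. $(x_n)_{n\in G}\in\mathcal{X}$ whenever $(x_n)_{n\in F}\in\mathcal{X}$ and $\emptyset\ne G\subseteq F$. Let $\mathcal{H}\subseteq[\mathbb{N}]^{<\infty}$ be a regular family and $\beta$ an ordinal with $\omega_1>\iota(\mathcal{H})\ge\beta\ge1$. Suppose that for every nonempty $F\in\mathcal{H}$ there exists $(x_n)_{n\in F}\in\mathcal{X}$. Then there exists a tree $T$ on $Y$ with $T\subseteq\mathcal{X}$ and $o(T)\ge\beta$.
   Context: An element $(x_n)_{n\in F}\in\prod_{n\in F}A_n$ with $F=\{n_1<\dots<n_k\}$ is identified with the finite sequence $(x_{n_1},\dots,x_{n_k})\in Y^k$. A tree on a set $S$ is a subset $T\subseteq\bigcup_{n\ge1}S^n$ closed under taking initial segments. For a well-founded tree $T$, $D(T)$ is the set of $(x_1,\dots,x_n)\in T$ having an extension $(x_1,\dots,x_n,x)\in T$, $D^0(T)=T$, $D^{\gamma+1}(T)=D(D^\gamma(T))$, $D^\gamma(T)=\bigcap_{\delta<\gamma}D^\delta(T)$ for limit $\gamma$, and $o(T)$ is the least $\gamma$ with $D^\gamma(T)=\emptyset$. A family $\mathcal{H}\subseteq[\mathbb{N}]^{<\infty}$ is regular if hereditary, spreading and compact in $2^{\mathbb{N}}$; $\iota(\mathcal{H})$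 is the ordinal $\gamma$ with $\mathcal{H}^{(\gamma)}=\{\emptyset\}$, where $\mathcal{H}^{(\gamma)}$ are the iterated Cantor–Bendixson derived sets (limit points, intersections at limits). *)

theory Defs
  imports "HOL-Analysis.Analysis"
begin

text \<open>For a well-order r and an element a of its field, trans_iter r X0 d a is the
  gamma-th iterate of d starting at X0, where gamma is the order type of the
  initial segment strictly below a: X0 at the least element, d applied at
  successors, intersections of all earlier iterates at limits.\<close>

definition trans_iter :: "'b rel \<Rightarrow> 'x set \<Rightarrow> ('x set \<Rightarrow> 'x set) \<Rightarrow> 'b \<Rightarrow> 'x set" where
  "trans_iter r X0 d = wfrec (r - Id) (\<lambda>f a.
     if \<forall>b. (b, a) \<notin> r - Id then X0
     else if \<exists>b. (b, a) \<in> r - Id \<and> (\<forall>c. (c, a) \<in> r - Id \<longrightarrow> (c, b) \<in> r)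
       then d (f (THE b. (b, a) \<in> r - Id \<and> (\<forall>c. (c, a) \<in> r - Id \<longrightarrow> (c, b) \<in> r)))
     else \<Inter> {f b | b. (b, a) \<in> r - Id})"

text \<open>The iterate at the order type of the whole well-order r.\<close>

definition trans_iter_full :: "'b rel \<Rightarrow> 'x set \<Rightarrow> ('x set \<Rightarrow> 'x set) \<Rightarrow> 'x set" where
  "trans_iter_full r X0 d =
     (if Field r = {} then X0
      else if \<exists>m\<in>Field r. \<forall>c\<in>Field r. (c, m) \<in> r
        then d (trans_iter r X0 d (THE m. m \<in> Field r \<and> (\<forall>c\<in>Field r. (c, m) \<in> r)))
      else \<Inter> {trans_iter r X0 d a | a. a \<in> Field r})"

definition char_set :: "nat set \<Rightarrow> (nat \<Rightarrow> bool)" where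
  "char_set F = (\<lambda>n. n \<in> F)"

definition hereditary_fam :: "nat set set \<Rightarrow> bool" where
  "hereditary_fam H \<longleftrightarrow> (\<forall>F\<in>H. \<forall>G. G \<subseteq> F \<longrightarrow> G \<in> H)"

definition spreading_fam :: "nat set set \<Rightarrow> bool" where
  "spreading_fam H \<longleftrightarrow> (\<forall>F\<in>H. \<forall>G. finite G \<and> card G = card F \<and>
     (\<forall>i < card F. sorted_list_of_set F ! i \<le> sorted_list_of_set G ! i) \<longrightarrow> G \<in> H)"

text \<open>Compactness in 2^N = (nat \<Rightarrow> bool) with the product topology.\<close>

definition regular_fam :: "nat set set \<Rightarrow> bool" where
  "regular_fam H \<longleftrightarrow> (\<forall>F\<in>H. finite F) \<and> hereditary_fam H \<and> spreading_fam H
     \<and> compact (char_set ` H)"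

definition cb_deriv :: "nat set set \<Rightarrow> nat set set" where
  "cb_deriv H = {F. char_set F islimpt (char_set ` H)}"

text \<open>iota(H) >= beta and iota(H) < omega_1: the index iota(H) exists, it is a countable
  ordinal (order type of a well-order on a set of naturals) and is at least beta.\<close>

definition iota_ge_countable :: "nat set set \<Rightarrow> 'b rel \<Rightarrow> bool" where
  "iota_ge_countable H \<beta> \<longleftrightarrow>
     (\<exists>i :: nat rel. Well_order i \<and> trans_iter_full i H cb_deriv = {{}} \<and> (\<beta>, i) \<in> ordLeq)"

definition tree_on :: "'y set \<Rightarrow> 'y list set \<Rightarrow> bool" where
  "tree_on S T \<longleftrightarrow> (\<forall>s\<in>T. s \<noteq> [] \<and> set s \<subseteq> S) \<and>
     (\<forall>s\<in>T. \<forall>k. 1 \<le> k \<and> k \<le> length s \<longrightarrow> take k s \<in> T)"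

definition wf_tree :: "'y list set \<Rightarrow> bool" where
  "wf_tree T \<longleftrightarrow> \<not> (\<exists>f :: nat \<Rightarrow> 'y. \<forall>n. map f [0..<Suc n] \<in> T)"

definition tree_D :: "'y list set \<Rightarrow> 'y list set" where
  "tree_D T = {s \<in> T. \<exists>x. s @ [x] \<in> T}"

text \<open>o(T) >= beta, i.e. D^gamma(T) is nonempty for every gamma < beta.\<close>

definition tree_order_ge :: "'y list set \<Rightarrow> 'b rel \<Rightarrow> bool" where
  "tree_order_ge T \<beta> \<longleftrightarrow> (\<forall>a\<in>Field \<beta>. trans_iter \<beta> T tree_D a \<noteq> {})"

text \<open>The element (x_n)_{n in F} with F = {n_1 < ... < n_k} as the list (x_{n_1},...,x_{n_k}).\<close>

definition seq_of :: "nat set \<Rightarrow> (nat \<Rightarrow> 'y) \<Rightarrow> 'y list" where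
  "seq_of F x = map x (sorted_list_of_set F)"

end

theory Submission
  imports Defs
begin


lemma hausdorff_bool: "Hausdorff_space (euclidean :: bool topology)"
  unfolding Hausdorff_space_def
proof (intro allI impI)
  fix x y :: bool assume "x \<in> topspace euclidean \<and> y \<in> topspace euclidean \<and> x \<noteq> y"
  then show "\<exists>U V. openin euclidean U \<and> openin euclidean V \<and> x \<in> U \<and> y \<in> V \<and> disjnt U V"
    by (intro exI[of _ "{x}"] exI[of _ "{y}"]) (auto simp: open_discrete disjnt_def)
qed

lemma char_set_inj: "char_set A = char_set B \<Longrightarrow> A = B"
  unfolding char_set_def by (metis Collect_mem_eq)

lemma char_set_surj: "g = char_set {n. g n}"
  unfolding char_set_def by simp
lemma hp: "Hausdorff_space (euclidean :: (nat \<Rightarrow> bool) topology)"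
proof -
  have "Hausdorff_space (product_topology (\<lambda>i::nat. (euclidean :: bool topology)) UNIV)"
    unfolding Hausdorff_space_product_topology using hausdorff_bool by blast
  then show ?thesis by (simp only: euclidean_product_topology)
qed
lemma closed_of_compact:
  assumes "compact (S :: (nat \<Rightarrow> bool) set)" shows "closed S"
proof -
  have "compactin euclidean S" using assms by simp
  then have "closedin euclidean S" using compactin_imp_closedin hp by blast
  then show ?thesis unfolding closed_closedin .
qed

lemma open_agree: "open {g :: nat \<Rightarrow> bool. \<forall>j\<in>{..m}. g (id j) \<in> {v j}}"
  by (rule product_topology_basis') (auto simp: open_discrete)

lemma open_agree1: "open {g :: nat \<Rightarrow> bool. g j = b}"
proof -
  have "open {g :: nat \<Rightarrow> bool. \<forall>i\<in>{j}. g (id i) \<in> {b}}"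
    by (rule product_topology_basis') (auto simp: open_discrete)
  then show ?thesis by simp
qed

lemma limpt_agree:
  assumes "char_set F islimpt char_set ` X"
  shows "\<exists>G\<in>X. G \<noteq> F \<and> (\<forall>j\<le>m. j \<in> G \<longleftrightarrow> j \<in> F)"
proof -
  let ?U = "{g :: nat \<Rightarrow> bool. \<forall>j\<in>{..m}. g (id j) \<in> {char_set F j}}"
  have "open ?U" by (rule open_agree)
  moreover have "char_set F \<in> ?U" by simp
  ultimately obtain y where y: "y \<in> char_set ` X" "y \<in> ?U" "y \<noteq> char_set F"
    using assms by (meson islimptE)
  then obtain G where G: "G \<in> X" "y = char_set G" by blast
  have "G \<noteq> F" using G y(3) by blast
  moreover have "\<forall>j\<le>m. j \<in> G \<longleftrightarrow> j \<in> F"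
  proof (intro allI impI)
    fix j assume "j \<le> m"
    then have "y j = char_set F j" using y(2) by simp
    then show "j \<in> G \<longleftrightarrow> j \<in> F" using G(2) by (simp add: char_set_def)
  qed
  ultimately show ?thesis using G(1) by blast
qed

lemma closed_cb: "closed (char_set ` cb_deriv X)"
  unfolding closed_limpt
proof (intro allI impI)
  fix g assume g: "g islimpt char_set ` cb_deriv X"
  have "g islimpt char_set ` X"
    unfolding islimpt_def
  proof (intro allI impI)
    fix U assume "g \<in> U" "open U"
    then obtain y where y: "y \<in> char_set ` cb_deriv X" "y \<in> U" "y \<noteq> g"
      using g unfolding islimpt_def by blast
    then obtain j where j: "y j \<noteq> g j" by blast
    let ?V = "U \<inter> {h. h j = y j}"
    have "open ?V" using \<open>open U\<close> open_agree1 by blast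
    have "y \<in> ?V" using y by simp
    obtain G where "G \<in> cb_deriv X" "y = char_set G" using y by blast
    then have "y islimpt char_set ` X" by (simp add: cb_deriv_def)
    then obtain z where "z \<in> char_set ` X" "z \<in> ?V" "z \<noteq> y"
      using \<open>open ?V\<close> \<open>y \<in> ?V\<close> by (meson islimptE)
    then show "\<exists>z\<in>char_set ` X. z \<in> U \<and> z \<noteq> g" using j by auto
  qed
  have e: "char_set {n. g n} = g" by (simp add: char_set_def)
  have "{n. g n} \<in> cb_deriv X" unfolding cb_deriv_def mem_Collect_eq e by (rule \<open>g islimpt char_set ` X\<close>)
  then have "char_set {n. g n} \<in> char_set ` cb_deriv X" by (rule imageI)
  then show "g \<in> char_set ` cb_deriv X" unfolding e .
qed

lemma cb_sub_closed:
  assumes "closed (char_set ` X)" shows "cb_deriv X \<subseteq> X"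
proof
  fix F assume "F \<in> cb_deriv X"
  then have "char_set F islimpt char_set ` X" by (simp add: cb_deriv_def)
  then have "char_set F \<in> char_set ` X" using assms unfolding closed_limpt by blast
  then obtain G where "G \<in> X" "char_set F = char_set G" by blast
  then show "F \<in> X" using char_set_inj by metis
qed

lemma no_infinite_chain:
  assumes cl: "closed (char_set ` H)" and fin: "\<forall>F\<in>H. finite F"
    and sm: "strict_mono (g :: nat \<Rightarrow> nat)" and ch: "\<forall>n. g ` {..n} \<in> H"
  shows False
proof -
  have lim: "(\<lambda>n. char_set (g ` {..n})) \<longlonglongrightarrow> char_set (range g)"
  proof -
    have "\<forall>j. limitin euclidean (\<lambda>n. char_set (g ` {..n}) j) (char_set (range g) j) sequentially"
    proof
      fix j
      have "eventually (\<lambda>n. char_set (g ` {..n}) j = char_set (range g) j) sequentially"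
        unfolding eventually_sequentially
      proof (intro exI allI impI)
        fix n assume "j \<le> n"
        have "j \<in> g ` {..n} \<longleftrightarrow> j \<in> range g"
        proof
          assume "j \<in> range g"
          then obtain k where "j = g k" by auto
          then have "k \<le> n" using strict_mono_imp_increasing[OF sm, of k] \<open>j \<le> n\<close> by simp
          then show "j \<in> g ` {..n}" using \<open>j = g k\<close> by auto
        qed auto
        then show "char_set (g ` {..n}) j = char_set (range g) j" by (simp add: char_set_def)
      qed
      then show "limitin euclidean (\<lambda>n. char_set (g ` {..n}) j) (char_set (range g) j) sequentially"
        by (simp add: tendsto_eventually)
    qed
    then have "limitin (product_topology (\<lambda>i. euclidean) UNIV) (\<lambda>n. char_set (g ` {..n})) (char_set (range g)) sequentially"
      by (simp add: limitin_componentwise)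
    then show ?thesis by (simp add: euclidean_product_topology)
  qed
  have "char_set (range g) \<in> char_set ` H"
    by (rule closed_sequentially[OF cl _ lim]) (use ch in auto)
  then have "range g \<in> H" using char_set_inj by blast
  then have "finite (range g)" using fin by blast
  moreover have "inj g" using sm strict_mono_imp_inj_on by blast
  ultimately show False using finite_imageD by fastforce
qed



lemma wo_wf: "Well_order r \<Longrightarrow> wf (r - Id)"
  by (simp add: well_order_on_def)

lemma wo_refl: "Well_order r \<Longrightarrow> a \<in> Field r \<Longrightarrow> (a, a) \<in> r"
  by (metis wo_rel.REFL wo_rel_def refl_onD)

lemma wo_total: "Well_order r \<Longrightarrow> a \<in> Field r \<Longrightarrow> b \<in> Field r \<Longrightarrow> (a, b) \<in> r \<or> (b, a) \<in> r"
  by (metis wo_rel.TOTALS wo_rel_def)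

lemma wo_trans: "Well_order r \<Longrightarrow> (a, b) \<in> r \<Longrightarrow> (b, c) \<in> r \<Longrightarrow> (a, c) \<in> r"
  by (metis wo_rel.TRANS wo_rel_def transD)

lemma wo_antisym: "Well_order r \<Longrightarrow> (a, b) \<in> r \<Longrightarrow> (b, a) \<in> r \<Longrightarrow> a = b"
  by (metis wo_rel.ANTISYM wo_rel_def antisymD)

lemma ti_unfold:
  assumes wo: "Well_order r"
  shows "trans_iter r X0 d a =
     (if \<forall>b. (b, a) \<notin> r - Id then X0
       else if \<exists>b. (b, a) \<in> r - Id \<and> (\<forall>c. (c, a) \<in> r - Id \<longrightarrow> (c, b) \<in> r)
       then d (trans_iter r X0 d (THE b. (b, a) \<in> r - Id \<and> (\<forall>c. (c, a) \<in> r - Id \<longrightarrow> (c, b) \<in> r)))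
       else \<Inter> {trans_iter r X0 d b | b. (b, a) \<in> r - Id})"
proof -
  let ?P = "\<lambda>b. (b, a) \<in> r - Id \<and> (\<forall>c. (c, a) \<in> r - Id \<longrightarrow> (c, b) \<in> r)"
  let ?g = "trans_iter r X0 d"
  have eq: "?g a = (\<lambda>f a.
     if \<forall>b. (b, a) \<notin> r - Id then X0
     else if \<exists>b. (b, a) \<in> r - Id \<and> (\<forall>c. (c, a) \<in> r - Id \<longrightarrow> (c, b) \<in> r)
       then d (f (THE b. (b, a) \<in> r - Id \<and> (\<forall>c. (c, a) \<in> r - Id \<longrightarrow> (c, b) \<in> r)))
     else \<Inter> {f b | b. (b, a) \<in> r - Id}) (cut ?g (r - Id) a) a"
    unfolding trans_iter_def by (rule wfrec[OF wo_wf[OF wo]])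
  show ?thesis
  proof (cases "\<exists>b. ?P b")
    case True
    then obtain b where b: "?P b" by blast
    have "?P (THE b. ?P b)"
      by (rule theI[of ?P b]) (use b wo_antisym[OF wo] in blast)+
    then have "cut ?g (r - Id) a (THE b. ?P b) = ?g (THE b. ?P b)" by (simp add: cut_apply)
    then show ?thesis using eq True by auto
  next
    case False
    have "{cut ?g (r - Id) a b | b. (b, a) \<in> r - Id} = {?g b | b. (b, a) \<in> r - Id}"
    proof (intro set_eqI iffI)
      fix x assume "x \<in> {cut ?g (r - Id) a b | b. (b, a) \<in> r - Id}"
      then obtain b where "x = cut ?g (r - Id) a b" "(b, a) \<in> r - Id" by blast
      then show "x \<in> {?g b | b. (b, a) \<in> r - Id}" by (auto simp: cut_apply)
    next
      fix x assume "x \<in> {?g b | b. (b, a) \<in> r - Id}"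
      then obtain b where "x = ?g b" "(b, a) \<in> r - Id" by blast
      then have "x = cut ?g (r - Id) a b" "(b, a) \<in> r - Id" by (auto simp: cut_apply)
      then show "x \<in> {cut ?g (r - Id) a b | b. (b, a) \<in> r - Id}" by blast
    qed
    then show ?thesis using eq False by (simp only: if_False)
  qed
qed

lemma ti_base:
  assumes "Well_order r" "\<forall>b. (b, a) \<notin> r - Id"
  shows "trans_iter r X0 d a = X0"
  using ti_unfold[OF assms(1), of X0 d a] assms(2) by simp

lemma ti_succ:
  assumes wo: "Well_order r" and b: "(b, a) \<in> r - Id" and mx: "\<forall>c. (c, a) \<in> r - Id \<longrightarrow> (c, b) \<in> r"
  shows "trans_iter r X0 d a = d (trans_iter r X0 d b)"
proof -
  have the: "(THE b. (b, a) \<in> r - Id \<and> (\<forall>c. (c, a) \<in> r - Id \<longrightarrow> (c, b) \<in> r)) = b"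
  proof (rule the_equality)
    show "(b, a) \<in> r - Id \<and> (\<forall>c. (c, a) \<in> r - Id \<longrightarrow> (c, b) \<in> r)" using b mx by blast
  next
    fix b' assume "(b', a) \<in> r - Id \<and> (\<forall>c. (c, a) \<in> r - Id \<longrightarrow> (c, b') \<in> r)"
    then show "b' = b" using b mx wo_antisym[OF wo] by blast
  qed
  have c1: "\<not> (\<forall>b. (b, a) \<notin> r - Id)" using b by blast
  have c2: "\<exists>b. (b, a) \<in> r - Id \<and> (\<forall>c. (c, a) \<in> r - Id \<longrightarrow> (c, b) \<in> r)" using b mx by blast
  show ?thesis
    using ti_unfold[OF wo, of X0 d a] c1 c2 the by (simp only: if_False if_True)
qed

lemma ti_lim:
  assumes wo: "Well_order r" and b: "(b0, a) \<in> r - Id"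
    and nmx: "\<not> (\<exists>b. (b, a) \<in> r - Id \<and> (\<forall>c. (c, a) \<in> r - Id \<longrightarrow> (c, b) \<in> r))"
  shows "trans_iter r X0 d a = \<Inter> {trans_iter r X0 d b | b. (b, a) \<in> r - Id}"
proof -
  have c1: "\<not> (\<forall>b. (b, a) \<notin> r - Id)" using b by blast
  show ?thesis
    using ti_unfold[OF wo, of X0 d a] c1 nmx by (simp only: if_False)
qed

lemma tf_max:
  assumes wo: "Well_order r" and m: "m \<in> Field r" "\<forall>c\<in>Field r. (c, m) \<in> r"
  shows "trans_iter_full r X0 d = d (trans_iter r X0 d m)"
proof -
  have the: "(THE m. m \<in> Field r \<and> (\<forall>c\<in>Field r. (c, m) \<in> r)) = m"
    using m wo_antisym[OF wo] by (intro the_equality) blast+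
  show ?thesis unfolding trans_iter_full_def using m the by auto
qed

lemma tf_nomax:
  assumes "Field r \<noteq> {}" "\<not> (\<exists>m\<in>Field r. \<forall>c\<in>Field r. (c, m) \<in> r)"
  shows "trans_iter_full r X0 d = \<Inter> {trans_iter r X0 d a | a. a \<in> Field r}"
  unfolding trans_iter_full_def using assms by auto

lemma ti_dec:
  assumes wo: "Well_order r"
    and Qd: "\<And>X. Q X \<Longrightarrow> Q (d X) \<and> d X \<subseteq> X"
    and QI: "\<And>XX. XX \<noteq> {} \<Longrightarrow> (\<forall>X\<in>XX. Q X) \<Longrightarrow> Q (\<Inter> XX)"
    and Q0: "Q X0"
  shows "Q (trans_iter r X0 d c) \<and> (\<forall>b. (b, c) \<in> r - Id \<longrightarrow> trans_iter r X0 d c \<subseteq> d (trans_iter r X0 d b))"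
  using wo_wf[OF wo]
proof (induction c rule: wf_induct_rule)
  case (less c)
  let ?I = "trans_iter r X0 d"
  show ?case
  proof (cases "\<forall>b. (b, c) \<notin> r - Id")
    case True
    then have "?I c = X0" by (rule ti_base[OF wo])
    then show ?thesis using True Q0 by auto
  next
    case nb: False
    show ?thesis
    proof (cases "\<exists>b. (b, c) \<in> r - Id \<and> (\<forall>e. (e, c) \<in> r - Id \<longrightarrow> (e, b) \<in> r)")
      case True
      then obtain p where p: "(p, c) \<in> r - Id" "\<forall>e. (e, c) \<in> r - Id \<longrightarrow> (e, p) \<in> r" by blast
      have eq: "?I c = d (?I p)" by (rule ti_succ[OF wo p])
      have IHp: "Q (?I p)" "\<forall>b. (b, p) \<in> r - Id \<longrightarrow> ?I p \<subseteq> d (?I b)" using less.IH[OF p(1)] by auto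
      have "Q (?I c)" using eq Qd[OF IHp(1)] by simp
      moreover have "?I c \<subseteq> d (?I b)" if "(b, c) \<in> r - Id" for b
      proof (cases "b = p")
        case True then show ?thesis using eq by simp
      next
        case False
        then have "(b, p) \<in> r - Id" using p that by blast
        then have "?I p \<subseteq> d (?I b)" using IHp(2) by blast
        then show ?thesis using eq Qd[OF IHp(1)] by blast
      qed
      ultimately show ?thesis by blast
    next
      case nmx: False
      obtain b0 where b0: "(b0, c) \<in> r - Id" using nb by blast
      have eq: "?I c = \<Inter> {?I b | b. (b, c) \<in> r - Id}" by (rule ti_lim[OF wo b0 nmx])
      have "Q (?I c)" unfolding eq
        by (rule QI) (use b0 less.IH in auto)
      moreover have "?I c \<subseteq> d (?I b)" if bc: "(b, c) \<in> r - Id" for b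
      proof -
        obtain b' where b': "(b', c) \<in> r - Id" "(b', b) \<notin> r" using nmx bc by blast
        have "b \<in> Field r" "b' \<in> Field r" using bc b' by (auto intro: FieldI1)
        then have "(b, b') \<in> r" using wo_total[OF wo] b'(2) by blast
        moreover have "b \<noteq> b'" using b'(2) wo_refl[OF wo] \<open>b' \<in> Field r\<close> by blast
        ultimately have "(b, b') \<in> r - Id" by simp
        then have "?I b' \<subseteq> d (?I b)" using less.IH[OF b'(1)] by blast
        moreover have "?I c \<subseteq> ?I b'" unfolding eq using b'(1) by blast
        ultimately show ?thesis by blast
      qed
      ultimately show ?thesis by blast
    qed
  qed
qed

lemma finite_max_below:
  assumes wo: "Well_order r" and "finite B"
  shows "B \<subseteq> S \<Longrightarrow> S \<noteq> {} \<Longrightarrow> S \<subseteq> Field r \<Longrightarrow> \<exists>m\<in>S. \<forall>b\<in>B. (b, m) \<in> r"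
  using assms(2)
proof (induction B rule: finite_induct)
  case empty then show ?case by blast
next
  case (insert x B)
  then obtain m where m: "m \<in> S" "\<forall>b\<in>B. (b, m) \<in> r" by blast
  have xF: "x \<in> Field r" "m \<in> Field r" using insert m by auto
  show ?case
  proof (cases "(x, m) \<in> r")
    case True then show ?thesis using m by blast
  next
    case False
    then have "(m, x) \<in> r" using wo_total[OF wo xF(1) xF(2)] by blast
    then show ?thesis using m insert wo_trans[OF wo] wo_refl[OF wo xF(1)] by blast
  qed
qed



lemma sl_set: "sorted_wrt (<) (L :: nat list) \<Longrightarrow> sorted_list_of_set (set L) = L"
  by (simp add: sorted_list_of_set_sort_remdups strict_sorted_iff distinct_remdups_id sorted_sort_id)

lemma sl_split:
  assumes "finite (G :: nat set)"
  shows "sorted_list_of_set G = sorted_list_of_set {g\<in>G. g \<le> m} @ sorted_list_of_set {g\<in>G. m < g}"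
proof -
  let ?L = "sorted_list_of_set {g\<in>G. g \<le> m} @ sorted_list_of_set {g\<in>G. m < g}"
  have f1: "finite {g\<in>G. g \<le> m}" "finite {g\<in>G. m < g}" using assms by auto
  have "sorted_wrt (<) ?L"
    unfolding sorted_wrt_append using f1 by (auto simp: strict_sorted_list_of_set)
  moreover have "set ?L = G" using f1 by auto
  ultimately show ?thesis using sl_set by metis
qed

lemma seq_take:
  assumes "finite (G :: nat set)"
  shows "seq_of {g\<in>G. g \<le> m} c = take (card {g\<in>G. g \<le> m}) (seq_of G c)"
  unfolding seq_of_def
  by (subst sl_split[OF assms, of m]) (simp add: take_map)

lemma seq_snoc:
  assumes "finite (F :: nat set)" "\<forall>x\<in>F. x < n"
  shows "seq_of (insert n F) c = seq_of F c @ [c n]"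
proof -
  have "sorted_wrt (<) (sorted_list_of_set F @ [n])"
    unfolding sorted_wrt_append using assms by (auto simp: strict_sorted_list_of_set)
  moreover have "set (sorted_list_of_set F @ [n]) = insert n F" using assms by auto
  ultimately have "sorted_list_of_set (insert n F) = sorted_list_of_set F @ [n]" using sl_set by metis
  then show ?thesis unfolding seq_of_def by simp
qed

lemma seq_len: "length (seq_of F c) = card F"
  unfolding seq_of_def by simp



theorem proposition21:
  fixes Y :: "'y set" and A :: "nat \<Rightarrow> 'y set" and X :: "'y list set"
    and H :: "nat set set" and \<beta> :: "'b rel"
  assumes A_fin: "\<forall>n. finite (A n) \<and> A n \<subseteq> Y"
    and A_disj: "\<forall>m n. m \<noteq> n \<longrightarrow> A m \<inter> A n = {}"
    and X_sub: "\<forall>s\<in>X. \<exists>F x. finite F \<and> F \<noteq> {} \<and> (\<forall>n\<in>F. x n \<in> A n) \<and> s = seq_of F x"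
    and X_her: "\<forall>F x G. finite F \<and> F \<noteq> {} \<and> (\<forall>n\<in>F. x n \<in> A n) \<and> seq_of F x \<in> X
                   \<and> G \<noteq> {} \<and> G \<subseteq> F \<longrightarrow> seq_of G x \<in> X"
    and H_reg: "regular_fam H"
    and \<beta>_wo: "Well_order \<beta>"
    and \<beta>_ge1: "Field \<beta> \<noteq> {}"
    and \<iota>: "iota_ge_countable H \<beta>"
    and H_X: "\<forall>F\<in>H. F \<noteq> {} \<longrightarrow> (\<exists>x. (\<forall>n\<in>F. x n \<in> A n) \<and> seq_of F x \<in> X)"
  shows "\<exists>T. tree_on Y T \<and> T \<subseteq> X \<and> wf_tree T \<and> tree_order_ge T \<beta>"
proof -
  have Hfin: "\<forall>F\<in>H. finite F" and Hher: "hereditary_fam H" and Hcomp: "compact (char_set ` H)"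
    using H_reg unfolding regular_fam_def by auto
  have Hcl: "closed (char_set ` H)" by (rule closed_of_compact[OF Hcomp])
  obtain i :: "nat rel" where iwo: "Well_order i" and ifull: "trans_iter_full i H cb_deriv = {{}}"
    and ble: "(\<beta>, i) \<in> ordLeq" using \<iota> unfolding iota_ge_countable_def by blast
  obtain f where emb: "embed \<beta> i f" using ble unfolding ordLeq_def by blast
  define T where "T = {s \<in> X. \<exists>F c. F \<in> H \<and> F \<noteq> {} \<and> (\<forall>n\<in>F. c n \<in> A n) \<and> s = seq_of F c}"
  define pc where "pc Z \<longleftrightarrow> (\<forall>s\<in>Z. \<forall>k. 1 \<le> k \<and> k \<le> length s \<longrightarrow> take k s \<in> Z)" for Z :: "'y list set"
  define Ib where "Ib = trans_iter \<beta> T tree_D"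
  define Ii where "Ii = trans_iter i H cb_deriv"
  have Tpc: "pc T" unfolding pc_def
  proof (intro ballI allI impI)
    fix s k assume s: "s \<in> T" and k: "1 \<le> k \<and> k \<le> length s"
    then obtain F c where F: "s \<in> X" "F \<in> H" "F \<noteq> {}" "\<forall>n\<in>F. c n \<in> A n" "s = seq_of F c"
      unfolding T_def by blast
    have fF: "finite F" using F Hfin by blast
    let ?L = "sorted_list_of_set F"
    define F' where "F' = set (take k ?L)"
    have sF': "sorted_list_of_set F' = take k ?L" unfolding F'_def
      by (rule sl_set) (simp add: strict_sorted_list_of_set sorted_wrt_take)
    have tk: "take k s = seq_of F' c" unfolding F(5) seq_of_def sF' by (simp add: take_map)
    have sub: "F' \<subseteq> F" unfolding F'_def using fF by (metis set_take_subset sorted_list_of_set(1))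
    have "length ?L = length s" using F(5) by (simp add: seq_of_def)
    then have "0 < length ?L" using k by linarith
    then have "?L \<noteq> []" by (metis length_greater_0_conv)
    then have "take k ?L \<noteq> []" using k by simp
    then have ne: "F' \<noteq> {}" unfolding F'_def by simp
    have "F' \<in> H" using Hher F(2) sub unfolding hereditary_fam_def by blast
    moreover have "seq_of F' c \<in> X" using X_her fF F sub ne by blast
    moreover have "\<forall>n\<in>F'. c n \<in> A n" using sub F(4) by blast
    ultimately show "take k s \<in> T" unfolding T_def tk using ne by blast
  qed
  have treeT: "tree_on Y T" unfolding tree_on_def
  proof (rule conjI)
    show "\<forall>s\<in>T. s \<noteq> [] \<and> set s \<subseteq> Y"
    proof
      fix s assume "s \<in> T"
      then obtain F c where F: "F \<in> H" "F \<noteq> {}" "\<forall>n\<in>F. c n \<in> A n" "s = seq_of F c"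
        unfolding T_def by blast
      have fF: "finite F" using F Hfin by blast
      show "s \<noteq> [] \<and> set s \<subseteq> Y"
        using F fF A_fin by (auto simp: seq_of_def sorted_list_of_set_eq_Nil_iff)
    qed
  next
    show "\<forall>s\<in>T. \<forall>k. 1 \<le> k \<and> k \<le> length s \<longrightarrow> take k s \<in> T" using Tpc unfolding pc_def by blast
  qed
  have TX: "T \<subseteq> X" unfolding T_def by blast
  have wfT: "wf_tree T" unfolding wf_tree_def
  proof
    assume "\<exists>g :: nat \<Rightarrow> 'y. \<forall>n. map g [0..<Suc n] \<in> T"
    then obtain g :: "nat \<Rightarrow> 'y" where g: "\<forall>n. map g [0..<Suc n] \<in> T" by blast
    define idx where "idx y = (THE n. y \<in> A n)" for y
    have idx: "idx y = n" if "y \<in> A n" for y n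
      unfolding idx_def using that A_disj by (intro the_equality) blast+
    define h where "h = idx \<circ> g"
    have key: "sorted_wrt (<) (map h [0..<Suc n]) \<and> h ` {..n} \<in> H" for n
    proof -
      obtain F c where F: "F \<in> H" "\<forall>n\<in>F. c n \<in> A n" "map g [0..<Suc n] = seq_of F c"
        using g unfolding T_def by blast
      have fF: "finite F" using F Hfin by blast
      have "map h [0..<Suc n] = map idx (seq_of F c)" unfolding h_def using F(3)
        by (metis map_map)
      also have "\<dots> = sorted_list_of_set F" unfolding seq_of_def map_map
        by (rule map_idI) (use F(2) fF idx in auto)
      finally have e: "map h [0..<Suc n] = sorted_list_of_set F" .
      have "h ` {..n} = set (map h [0..<Suc n])" by (simp only: set_map set_upt atLeast0LessThan lessThan_Suc_atMost)
      also have "\<dots> = F" using e fF by simp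
      finally show ?thesis using e F(1) by (simp add: strict_sorted_list_of_set)
    qed
    have "strict_mono h" unfolding strict_mono_Suc_iff
    proof
      fix k
      have "sorted_wrt (<) (map h [0..<Suc (Suc k)])" using key by blast
      then show "h k < h (Suc k)" by (simp add: sorted_wrt_append)
    qed
    then show False using no_infinite_chain[OF Hcl Hfin] key by blast
  qed
  have Qb: "(Ib c \<subseteq> T \<and> pc (Ib c)) \<and> (\<forall>b. (b, c) \<in> \<beta> - Id \<longrightarrow> Ib c \<subseteq> tree_D (Ib b))" for c
    unfolding Ib_def
  proof (rule ti_dec[OF \<beta>_wo, where Q = "\<lambda>Z. Z \<subseteq> T \<and> pc Z"])
    fix Z assume Z: "Z \<subseteq> T \<and> pc Z"
    have sub: "tree_D Z \<subseteq> Z" unfolding tree_D_def by blast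
    have "pc (tree_D Z)" unfolding pc_def
    proof (intro ballI allI impI)
      fix s k assume s: "s \<in> tree_D Z" and k: "1 \<le> k \<and> k \<le> length s"
      then obtain x where sx: "s \<in> Z" "s @ [x] \<in> Z" unfolding tree_D_def by blast
      have tk: "take k s \<in> Z" using Z sx(1) k unfolding pc_def by blast
      show "take k s \<in> tree_D Z"
      proof (cases "k < length s")
        case True
        have "take k s @ [s ! k] = take (Suc k) s" using True by (simp add: take_Suc_conv_app_nth)
        moreover have "take (Suc k) s \<in> Z" using Z sx(1) True unfolding pc_def by simp
        ultimately have "take k s @ [s ! k] \<in> Z" by simp
        then show ?thesis using tk unfolding tree_D_def by blast
      next
        case False
        then have "take k s = s" using k by simp
        then show ?thesis using sx unfolding tree_D_def by auto
      qed
    qed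
    then show "(tree_D Z \<subseteq> T \<and> pc (tree_D Z)) \<and> tree_D Z \<subseteq> Z" using sub Z by blast
  next
    fix XX :: "'y list set set" assume XX: "XX \<noteq> {}" "\<forall>X\<in>XX. X \<subseteq> T \<and> pc X"
    then show "\<Inter> XX \<subseteq> T \<and> pc (\<Inter> XX)" unfolding pc_def by blast
  next
    show "T \<subseteq> T \<and> pc T" using Tpc by blast
  qed
  have injc: "inj char_set" unfolding inj_on_def using char_set_inj by blast
  have Qi: "(Ii c \<subseteq> H \<and> closed (char_set ` Ii c)) \<and> (\<forall>b. (b, c) \<in> i - Id \<longrightarrow> Ii c \<subseteq> cb_deriv (Ii b))" for c
    unfolding Ii_def
  proof (rule ti_dec[OF iwo, where Q = "\<lambda>Z. Z \<subseteq> H \<and> closed (char_set ` Z)"])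
    fix Z assume Z: "Z \<subseteq> H \<and> closed (char_set ` Z)"
    have "cb_deriv Z \<subseteq> Z" using Z cb_sub_closed by blast
    then show "(cb_deriv Z \<subseteq> H \<and> closed (char_set ` cb_deriv Z)) \<and> cb_deriv Z \<subseteq> Z"
      using Z closed_cb by blast
  next
    fix XX :: "nat set set set" assume XX: "XX \<noteq> {}" "\<forall>X\<in>XX. X \<subseteq> H \<and> closed (char_set ` X)"
    then obtain j where j: "j \<in> XX" by blast
    have "char_set ` (\<Inter> (id ` XX)) = (\<Inter>x\<in>XX. char_set ` id x)"
      by (rule image_INT[of char_set UNIV]) (use injc j in auto)
    then have "char_set ` \<Inter> XX = (\<Inter>x\<in>XX. char_set ` x)" by simp
    moreover have "closed (\<Inter>x\<in>XX. char_set ` x)" using XX(2) by (intro closed_INT) blast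
    moreover have "\<Inter> XX \<subseteq> H" using XX(2) j by blast
    ultimately show "\<Inter> XX \<subseteq> H \<and> closed (char_set ` \<Inter> XX)" by simp
  next
    show "H \<subseteq> H \<and> closed (char_set ` H)" using Hcl by blast
  qed
  have cbsub: "cb_deriv (Ii c) \<subseteq> Ii c" for c using Qi[of c] cb_sub_closed by blast
  have fFi: "f a \<in> Field i" if "a \<in> Field \<beta>" for a using embed_in_Field[OF emb that] .
  have fS: "f ` underS \<beta> a = underS i (f a)" if "a \<in> Field \<beta>" for a
    using embed_underS[OF \<beta>_wo emb that] by (simp add: bij_betw_def)
  have fc: "(f a, f b) \<in> i" if "(a, b) \<in> \<beta>" for a b
    using embed_compat[OF emb] that unfolding compat_def by blast
  have claim: "a \<in> Field \<beta> \<longrightarrow> (\<forall>F\<in>Ii (f a). F \<noteq> {} \<longrightarrow> (\<exists>c. (\<forall>n\<in>F. c n \<in> A n) \<and> seq_of F c \<in> Ib a))" for a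
    using wo_wf[OF \<beta>_wo]
  proof (induction a rule: wf_induct_rule)
    case (less a)
    show ?case
    proof (intro impI ballI)
      fix F assume aF: "a \<in> Field \<beta>" and FI: "F \<in> Ii (f a)" and Fne: "F \<noteq> {}"
      have S: "f ` underS \<beta> a = underS i (f a)" using fS aF by blast
      show "\<exists>c. (\<forall>n\<in>F. c n \<in> A n) \<and> seq_of F c \<in> Ib a"
      proof (cases "\<forall>b. (b, a) \<notin> \<beta> - Id")
        case True
        then have "underS \<beta> a = {}" unfolding underS_def by auto
        then have "underS i (f a) = {}" using S by simp
        then have "\<forall>b. (b, f a) \<notin> i - Id" unfolding underS_def by auto
        then have "Ii (f a) = H" unfolding Ii_def by (rule ti_base[OF iwo])
        have IbT: "Ib a = T" unfolding Ib_def by (rule ti_base[OF \<beta>_wo True])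
        have FH: "F \<in> H" using FI \<open>Ii (f a) = H\<close> by simp
        obtain c where c: "\<forall>n\<in>F. c n \<in> A n" "seq_of F c \<in> X" using H_X FH Fne by blast
        have "seq_of F c \<in> T" unfolding T_def using c FH Fne by blast
        then show ?thesis using c(1) IbT by blast
      next
        case nb: False
        show ?thesis
        proof (cases "\<exists>p. (p, a) \<in> \<beta> - Id \<and> (\<forall>e. (e, a) \<in> \<beta> - Id \<longrightarrow> (e, p) \<in> \<beta>)")
          case True
          then obtain p where p: "(p, a) \<in> \<beta> - Id" "\<forall>e. (e, a) \<in> \<beta> - Id \<longrightarrow> (e, p) \<in> \<beta>" by blast
          have Iba: "Ib a = tree_D (Ib p)" unfolding Ib_def by (rule ti_succ[OF \<beta>_wo p])
          have "p \<in> underS \<beta> a" using p(1) unfolding underS_def by auto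
          then have "f p \<in> underS i (f a)" using S by blast
          then have fp: "(f p, f a) \<in> i - Id" unfolding underS_def by auto
          have fmx: "\<forall>e'. (e', f a) \<in> i - Id \<longrightarrow> (e', f p) \<in> i"
          proof (intro allI impI)
            fix e' assume "(e', f a) \<in> i - Id"
            then have "e' \<in> underS i (f a)" unfolding underS_def by auto
            then have "e' \<in> f ` underS \<beta> a" using S by simp
            then obtain e where "e' = f e" "e \<in> underS \<beta> a" by blast
            then have "e' = f e" "(e, a) \<in> \<beta> - Id" unfolding underS_def by auto
            then show "(e', f p) \<in> i" using p(2) fc by blast
          qed
          have Iia: "Ii (f a) = cb_deriv (Ii (f p))" unfolding Ii_def by (rule ti_succ[OF iwo fp fmx])
          have pF: "p \<in> Field \<beta>" using p(1) by (auto intro: FieldI1)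
          have IH: "\<forall>G\<in>Ii (f p). G \<noteq> {} \<longrightarrow> (\<exists>c. (\<forall>n\<in>G. c n \<in> A n) \<and> seq_of G c \<in> Ib p)"
            using less.IH[OF p(1)] pF by blast
          let ?K = "Ii (f p)"
          have KH: "?K \<subseteq> H" using Qi by blast
          have Fcb: "F \<in> cb_deriv ?K" using FI Iia by simp
          then have "F \<in> ?K" using cbsub by blast
          then have fF: "finite F" using KH Hfin by blast
          define mF where "mF = Max F"
          have Fle: "\<forall>x\<in>F. x \<le> mF" unfolding mF_def using fF by simp
          have "char_set F islimpt char_set ` ?K" using Fcb unfolding cb_deriv_def by simp
          from limpt_agree[OF this, of mF] obtain G where G: "G \<in> ?K" "G \<noteq> F" "\<forall>j\<le>mF. j \<in> G \<longleftrightarrow> j \<in> F"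
            by blast
          have fG: "finite G" using G(1) KH Hfin by blast
          have FG: "{g\<in>G. g \<le> mF} = F" using G(3) Fle by auto
          have "\<exists>g\<in>G. mF < g"
          proof (rule ccontr)
            assume "\<not> (\<exists>g\<in>G. mF < g)"
            then have "G = {g\<in>G. g \<le> mF}" by auto
            then show False using FG G(2) by simp
          qed
          then have neU: "{g\<in>G. mF < g} \<noteq> {}" by blast
          define n where "n = Min {g\<in>G. mF < g}"
          have nin: "n \<in> G" "mF < n" using Min_in[OF _ neU] fG unfolding n_def by auto
          have nmin: "\<forall>g\<in>G. mF < g \<longrightarrow> n \<le> g" unfolding n_def using fG by auto
          have G'eq: "{g\<in>G. g \<le> n} = insert n F"
          proof
            show "{g\<in>G. g \<le> n} \<subseteq> insert n F"
            proof
              fix g assume g: "g \<in> {g\<in>G. g \<le> n}"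
              show "g \<in> insert n F"
              proof (cases "g \<le> mF")
                case True then show ?thesis using g FG by blast
              next
                case False then show ?thesis using g nmin by force
              qed
            qed
            show "insert n F \<subseteq> {g\<in>G. g \<le> n}" using nin FG Fle by force
          qed
          have Gne: "G \<noteq> {}" using nin by blast
          obtain c where c: "\<forall>n\<in>G. c n \<in> A n" "seq_of G c \<in> Ib p" using IH G(1) Gne by blast
          have pcp: "pc (Ib p)" using Qb by blast
          have FsubG: "F \<subseteq> G" using FG by blast
          have cardF: "1 \<le> card F" using fF Fne by (simp add: Suc_le_eq card_gt_0_iff)
          have "card F \<le> card G" using FsubG fG by (rule card_mono[rotated])
          have "card (insert n F) \<le> card G" using G'eq fG by (metis (no_types, lifting) card_mono mem_Collect_eq subsetI)
          have s1: "seq_of F c = take (card F) (seq_of G c)" using seq_take[OF fG, of mF c] FG by simp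
          have s2: "seq_of (insert n F) c = take (card (insert n F)) (seq_of G c)"
            using seq_take[OF fG, of n c] G'eq by simp
          have allk: "\<forall>k. 1 \<le> k \<and> k \<le> card G \<longrightarrow> take k (seq_of G c) \<in> Ib p"
            using pcp c(2) seq_len[of G c] unfolding pc_def by metis
          have "seq_of F c \<in> Ib p" unfolding s1 using allk cardF \<open>card F \<le> card G\<close> by blast
          moreover have "seq_of (insert n F) c \<in> Ib p" unfolding s2
            using allk \<open>card (insert n F) \<le> card G\<close> card_insert_le[of F n] cardF by (meson le_trans)
          moreover have "seq_of (insert n F) c = seq_of F c @ [c n]"
            by (rule seq_snoc[OF fF]) (use Fle nin in force)
          ultimately have "seq_of F c \<in> tree_D (Ib p)" unfolding tree_D_def by auto
          then show ?thesis using Iba c(1) FsubG by blast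
        next
          case nmx: False
          obtain b0 where b0: "(b0, a) \<in> \<beta> - Id" using nb by blast
          have Iba: "Ib a = \<Inter> {Ib b | b. (b, a) \<in> \<beta> - Id}" unfolding Ib_def by (rule ti_lim[OF \<beta>_wo b0 nmx])
          have dec: "Ii (f a) \<subseteq> Ii (f b)" if "(b, a) \<in> \<beta> - Id" for b
          proof -
            have "b \<in> underS \<beta> a" using that unfolding underS_def by auto
            then have "f b \<in> underS i (f a)" using S by blast
            then have "(f b, f a) \<in> i - Id" unfolding underS_def by auto
            then show ?thesis using Qi[of "f a"] cbsub[of "f b"] by blast
          qed
          have IHb: "\<exists>c. (\<forall>n\<in>F. c n \<in> A n) \<and> seq_of F c \<in> Ib b" if "(b, a) \<in> \<beta> - Id" for b
          proof -
            have "b \<in> Field \<beta>" using that by (auto intro: FieldI1)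
            then show ?thesis using less.IH[OF that] dec[OF that] FI Fne by blast
          qed
          have fF: "finite F"
          proof -
            have "F \<in> Ii (f b0)" using dec[OF b0] FI by blast
            then show ?thesis using Qi Hfin by blast
          qed
          define Sq where "Sq = {seq_of F c | c. \<forall>n\<in>F. c n \<in> A n}"
          have "Sq \<subseteq> {xs. set xs \<subseteq> \<Union> (A ` F) \<and> length xs = card F}"
            unfolding Sq_def seq_of_def using fF by fastforce
          moreover have "finite (\<Union> (A ` F))" using fF A_fin by blast
          ultimately have fSq: "finite Sq" using finite_subset finite_lists_length_eq by blast
          show ?thesis
          proof (rule ccontr)
            assume nc: "\<not> ?thesis"
            have "\<forall>s\<in>Sq. \<exists>b. (b, a) \<in> \<beta> - Id \<and> s \<notin> Ib b"
            proof
              fix s assume "s \<in> Sq"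
              then obtain c where c: "\<forall>n\<in>F. c n \<in> A n" "s = seq_of F c" unfolding Sq_def by blast
              then have "s \<notin> Ib a" using nc by blast
              then show "\<exists>b. (b, a) \<in> \<beta> - Id \<and> s \<notin> Ib b" unfolding Iba by blast
            qed
            then obtain bs where bs: "\<forall>s\<in>Sq. (bs s, a) \<in> \<beta> - Id \<and> s \<notin> Ib (bs s)"
              by metis
            have "\<exists>m\<in>{b. (b, a) \<in> \<beta> - Id}. \<forall>b\<in>bs ` Sq. (b, m) \<in> \<beta>"
              by (rule finite_max_below[OF \<beta>_wo]) (use fSq bs b0 in \<open>auto intro: FieldI1\<close>)
            then obtain m where m: "(m, a) \<in> \<beta> - Id" "\<forall>s\<in>Sq. (bs s, m) \<in> \<beta>" by auto
            obtain c where c: "\<forall>n\<in>F. c n \<in> A n" "seq_of F c \<in> Ib m" using IHb[OF m(1)] by blast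
            let ?s = "seq_of F c"
            have sS: "?s \<in> Sq" unfolding Sq_def using c(1) by blast
            have "?s \<notin> Ib (bs ?s)" using bs sS by blast
            moreover have "(bs ?s, m) \<in> \<beta>" using m sS by blast
            ultimately show False
            proof (cases "bs ?s = m")
              case True then show False using c(2) \<open>?s \<notin> Ib (bs ?s)\<close> by simp
            next
              case False
              then have "(bs ?s, m) \<in> \<beta> - Id" using \<open>(bs ?s, m) \<in> \<beta>\<close> by simp
              then have "Ib m \<subseteq> tree_D (Ib (bs ?s))" using Qb[of m] by blast
              moreover have "tree_D (Ib (bs ?s)) \<subseteq> Ib (bs ?s)" unfolding tree_D_def by blast
              ultimately show False using c(2) \<open>?s \<notin> Ib (bs ?s)\<close> by blast
            qed
          qed
        qed
      qed
    qed
  qed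
  have ord: "tree_order_ge T \<beta>" unfolding tree_order_ge_def
  proof
    fix a assume aF: "a \<in> Field \<beta>"
    define a' where "a' = f a"
    have a'F: "a' \<in> Field i" unfolding a'_def using fFi aF .
    have "\<exists>F\<in>Ii a'. F \<noteq> {}"
    proof (rule ccontr)
      assume "\<not> (\<exists>F\<in>Ii a'. F \<noteq> {})"
      then have allE: "\<forall>F\<in>Ii a'. F = {}" by blast
      have cb0: "cb_deriv (Ii a') = {}"
      proof (rule ccontr)
        assume "cb_deriv (Ii a') \<noteq> {}"
        then obtain F where "F \<in> cb_deriv (Ii a')" by blast
        then have lp: "char_set F islimpt char_set ` Ii a'" unfolding cb_deriv_def by simp
        obtain G where "G \<in> Ii a'" "G \<noteq> F" using limpt_agree[OF lp, of 0] by blast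
        then have "F \<noteq> {}" using allE by blast
        then obtain j where j: "j \<in> F" by blast
        obtain G' where "G' \<in> Ii a'" "\<forall>k\<le>j. k \<in> G' \<longleftrightarrow> k \<in> F" using limpt_agree[OF lp, of j] by blast
        then show False using allE j by auto
      qed
      have "trans_iter_full i H cb_deriv \<subseteq> cb_deriv (Ii a')"
      proof (cases "\<exists>m\<in>Field i. \<forall>c\<in>Field i. (c, m) \<in> i")
        case True
        then obtain m where m: "m \<in> Field i" "\<forall>c\<in>Field i. (c, m) \<in> i" by blast
        have eq: "trans_iter_full i H cb_deriv = cb_deriv (Ii m)" unfolding Ii_def by (rule tf_max[OF iwo m])
        show ?thesis
        proof (cases "a' = m")
          case True then show ?thesis using eq by simp
        next
          case False
          then have "(a', m) \<in> i - Id" using m a'F by blast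
          then have "Ii m \<subseteq> cb_deriv (Ii a')" using Qi[of m] by blast
          then show ?thesis using eq cbsub[of m] by blast
        qed
      next
        case False
        have fne: "Field i \<noteq> {}" using a'F by blast
        have eq: "trans_iter_full i H cb_deriv = \<Inter> {Ii c | c. c \<in> Field i}" unfolding Ii_def by (rule tf_nomax[OF fne False])
        obtain c where c: "c \<in> Field i" "(c, a') \<notin> i" using False a'F by blast
        have "(a', c) \<in> i" using wo_total[OF iwo a'F c(1)] c(2) by blast
        moreover have "a' \<noteq> c" using c wo_refl[OF iwo] by blast
        ultimately have "Ii c \<subseteq> cb_deriv (Ii a')" using Qi[of c] by blast
        then show ?thesis unfolding eq using c(1) by blast
      qed
      then show False using ifull cb0 by simp
    qed
    then obtain F where F: "F \<in> Ii (f a)" "F \<noteq> {}" unfolding a'_def by blast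
    then show "trans_iter \<beta> T tree_D a \<noteq> {}" using claim[of a] aF unfolding Ib_def by blast
  qed
  show ?thesis using treeT TX wfT ord by blast
qed

end
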